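(* Let $n\ge 4$, $Q=\{0,\dots,n-1\}$, and let $X_n$ be a transition semigroup of maximum cardinality among transition semigroups of minimal complete DFAs with state set $Q$, initial state $0$ and empty state $n-1$ accepting suffix-free languages. If $X_n\neq\mathbf{V}_{\mathrm{sf}}(n)$ and $X_n\neq\mathbf{W}_{\mathrm{sf}}(n)$, then $X_n$ contains no pair of conflicting transformations.
   Context: A language $L$ is suffix-free if whenever $w\in L$ and $u\in L$ with $u$ a suffix of $w$, then $u=w$. Transformations act on the right ($qt$ is the image of $q$ under $t$). The transition semigroup of a DFA is the semigroup of transformations of its state set generated by the transformations induced by its letters. For a semigroup $T$ of transformations of $Q$: an unordered pair $\{p,q\}$ of distinct states of $Q\setminus\{0,n-1\}$ is colliding in $T$ if there exist $t\in T$ and $r\in Q\setminus\{0,n-1\}$ with $0t=p$ and $rt=q$; the pair is focused by a transformation $u$ if $pu=qu=r$ for some $r\notin\{0,n-1\}$. Define $\mathbf{B}_{\mathrm{sf}}(n)=\{t:Q\to Q \mid 0\notin Qt,\ (n-1)t=n-1,\ \text{and for all } j\ge1:\ 0t^j=n-1 \text{ or } 0t^j\neq qt^j \text{ for all } 0<q<n-1\}$, $\mathbf{V}_{\mathrm{sf}}(n)=\{t\in\mathbf{B}_{\mathrm{sf}}(n)\mid \text{for all } p\neq q \text{ in } Q:\ pt=qt=n-1 \text{ or } pt\neq qt\}$, and $\mathbf{W}_{\mathrm{sf}}(n)=\{t\in\mathbf{B}_{\mathrm{sf}}(n)\mid 0t=n-1 \text{ or } qt=n-1 \text{ for all } 1\le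 q\le n-2\}$. Two transformations $t,t'\in\mathbf{B}_{\mathrm{sf}}(n)$ conflict if, whenever $t$ and $t'$ both belong to the transition semigroup of a DFA $\mathcal{D}$ (state set $Q$, initial state $0$), at least one of the following holds: (1) the language accepted by $\mathcal{D}$ is not suffix-free; (2) every two states from $\{1,\dots,n-2\}$ are colliding in that semigroup; (3) every two states from $\{1,\dots,n-2\}$ are focused by some transformation of that semigroup. *)

theory Defs
  imports Main
begin

text \<open>States are the natural numbers 0..n-1.  A transformation of Q = {0..<n}
  is represented canonically as a function nat => nat that maps Q into Q and
  fixes every number >= n.  Transformations act on the right: q t = t q, and
  the product "t then u" is the function composition u o t.\<close>

definition trans :: "nat \<Rightarrow> (nat \<Rightarrow> nat) set" where
  "trans n = {t. (\<forall>q<n. t q < n) \<and> (\<forall>q. n \<le> q \<longrightarrow> t q = q)}"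

definition is_dfa :: "nat \<Rightarrow> nat set \<Rightarrow> (nat \<Rightarrow> nat \<Rightarrow> nat) \<Rightarrow> nat set \<Rightarrow> bool" where
  "is_dfa n Alph delta F \<longleftrightarrow> finite Alph \<and> (\<forall>a\<in>Alph. delta a \<in> trans n) \<and> F \<subseteq> {..<n}"

definition delta_word :: "(nat \<Rightarrow> nat \<Rightarrow> nat) \<Rightarrow> nat \<Rightarrow> nat list \<Rightarrow> nat" where
  "delta_word delta q w = fold (\<lambda>a p. delta a p) w q"

definition lang :: "nat set \<Rightarrow> (nat \<Rightarrow> nat \<Rightarrow> nat) \<Rightarrow> nat set \<Rightarrow> nat list set" where
  "lang Alph delta F = {w. w \<in> lists Alph \<and> delta_word delta 0 w \<in> F}"

definition suffix_free :: "'a list set \<Rightarrow> bool" where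
  "suffix_free L \<longleftrightarrow> (\<forall>w\<in>L. \<forall>u\<in>L. (\<exists>v. w = v @ u) \<longrightarrow> u = w)"

definition tsg :: "nat set \<Rightarrow> (nat \<Rightarrow> nat \<Rightarrow> nat) \<Rightarrow> (nat \<Rightarrow> nat) set" where
  "tsg Alph delta = {(\<lambda>q. delta_word delta q w) | w. w \<in> lists Alph \<and> w \<noteq> []}"

definition minimal_dfa :: "nat \<Rightarrow> nat set \<Rightarrow> (nat \<Rightarrow> nat \<Rightarrow> nat) \<Rightarrow> nat set \<Rightarrow> bool" where
  "minimal_dfa n Alph delta F \<longleftrightarrow>
     (\<forall>q<n. \<exists>w\<in>lists Alph. delta_word delta 0 w = q) \<and>
     (\<forall>p<n. \<forall>q<n. p \<noteq> q \<longrightarrow>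
        (\<exists>w\<in>lists Alph. (delta_word delta p w \<in> F) \<noteq> (delta_word delta q w \<in> F)))"

definition empty_state :: "nat set \<Rightarrow> (nat \<Rightarrow> nat \<Rightarrow> nat) \<Rightarrow> nat set \<Rightarrow> nat \<Rightarrow> bool" where
  "empty_state Alph delta F e \<longleftrightarrow> (\<forall>w\<in>lists Alph. delta_word delta e w \<notin> F)"

definition sf_min_dfa :: "nat \<Rightarrow> nat set \<Rightarrow> (nat \<Rightarrow> nat \<Rightarrow> nat) \<Rightarrow> nat set \<Rightarrow> bool" where
  "sf_min_dfa n Alph delta F \<longleftrightarrow> is_dfa n Alph delta F \<and> minimal_dfa n Alph delta F \<and>
     empty_state Alph delta F (n - 1) \<and> suffix_free (lang Alph delta F)"

definition B_sf :: "nat \<Rightarrow> (nat \<Rightarrow> nat) set" where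
  "B_sf n = {t \<in> trans n. (\<forall>q<n. t q \<noteq> 0) \<and> t (n - 1) = n - 1 \<and>
     (\<forall>j\<ge>1. (t ^^ j) 0 = n - 1 \<or> (\<forall>q. 0 < q \<and> q < n - 1 \<longrightarrow> (t ^^ j) 0 \<noteq> (t ^^ j) q))}"

definition V_sf :: "nat \<Rightarrow> (nat \<Rightarrow> nat) set" where
  "V_sf n = {t \<in> B_sf n. \<forall>p<n. \<forall>q<n. p \<noteq> q \<longrightarrow> (t p = n - 1 \<and> t q = n - 1) \<or> t p \<noteq> t q}"

definition W_sf :: "nat \<Rightarrow> (nat \<Rightarrow> nat) set" where
  "W_sf n = {t \<in> B_sf n. t 0 = n - 1 \<or> (\<forall>q. 1 \<le> q \<and> q \<le> n - 2 \<longrightarrow> t q = n - 1)}"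

definition colliding :: "nat \<Rightarrow> (nat \<Rightarrow> nat) set \<Rightarrow> nat \<Rightarrow> nat \<Rightarrow> bool" where
  "colliding n T p q \<longleftrightarrow> (\<exists>t\<in>T. \<exists>r. 0 < r \<and> r < n - 1 \<and>
      ((t 0 = p \<and> t r = q) \<or> (t 0 = q \<and> t r = p)))"

definition focused :: "nat \<Rightarrow> (nat \<Rightarrow> nat) \<Rightarrow> nat \<Rightarrow> nat \<Rightarrow> bool" where
  "focused n u p q \<longleftrightarrow> (\<exists>r. 0 < r \<and> r < n - 1 \<and> u p = r \<and> u q = r)"

definition conflict :: "nat \<Rightarrow> (nat \<Rightarrow> nat) \<Rightarrow> (nat \<Rightarrow> nat) \<Rightarrow> bool" where
  "conflict n t t' \<longleftrightarrow> t \<in> B_sf n \<and> t' \<in> B_sf n \<and>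
    (\<forall>Alph delta F. is_dfa n Alph delta F \<and> t \<in> tsg Alph delta \<and> t' \<in> tsg Alph delta \<longrightarrow>
       \<not> suffix_free (lang Alph delta F) \<or>
       (\<forall>p q. 1 \<le> p \<and> p \<le> n - 2 \<and> 1 \<le> q \<and> q \<le> n - 2 \<and> p \<noteq> q \<longrightarrow> colliding n (tsg Alph delta) p q) \<or>
       (\<forall>p q. 1 \<le> p \<and> p \<le> n - 2 \<and> 1 \<le> q \<and> q \<le> n - 2 \<and> p \<noteq> q \<longrightarrow>
          (\<exists>u\<in>tsg Alph delta. focused n u p q)))"

end

theory Submission
  imports Defs "HOL-Library.FuncSet"
begin

lemma dw_nil[simp]: "delta_word d q [] = q" by (simp add: delta_word_def)
lemma dw_cons[simp]: "delta_word d q (a#w) = delta_word d (d a q) w" by (simp add: delta_word_def)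
lemma dw_append: "delta_word d q (u@v) = delta_word d (delta_word d q u) v" by (simp add: delta_word_def)

lemma dw_range: "is_dfa n A d F \<Longrightarrow> w \<in> lists A \<Longrightarrow> q < n \<Longrightarrow> delta_word d q w < n"
  by (induction w arbitrary: q) (auto simp: is_dfa_def trans_def)

lemma dw_fix: "is_dfa n A d F \<Longrightarrow> w \<in> lists A \<Longrightarrow> n \<le> q \<Longrightarrow> delta_word d q w = q"
  by (induction w arbitrary: q) (auto simp: is_dfa_def trans_def)

lemma tsgE: "t \<in> tsg A d \<Longrightarrow> \<exists>w. w \<in> lists A \<and> w \<noteq> [] \<and> t = (\<lambda>q. delta_word d q w)"
  by (auto simp: tsg_def)

lemma tsg_trans: "is_dfa n A d F \<Longrightarrow> t \<in> tsg A d \<Longrightarrow> t \<in> trans n"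
  using dw_range dw_fix unfolding trans_def tsg_def by fastforce

lemma sf_key:
  assumes "sf_min_dfa n A d F" "n \<ge> 2" "a \<in> lists A" "b \<in> lists A" "b \<noteq> []"
    "delta_word d 0 (b@a) = delta_word d 0 a" "delta_word d 0 a < n" "delta_word d 0 a \<noteq> n-1"
  shows False
proof -
  let ?s = "delta_word d 0 a"
  from assms(1) have min: "minimal_dfa n A d F" and emp: "empty_state A d F (n-1)"
    and sf: "suffix_free (lang A d F)" by (auto simp: sf_min_dfa_def)
  have "n - 1 < n" using assms(2) by simp
  with min assms(7,8) obtain z where z: "z \<in> lists A"
    "(delta_word d ?s z \<in> F) \<noteq> (delta_word d (n-1) z \<in> F)"
    unfolding minimal_dfa_def by blast
  with emp have zF: "delta_word d ?s z \<in> F" by (auto simp: empty_state_def)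
  have "a@z \<in> lang A d F" using zF z assms(3) by (auto simp: lang_def dw_append)
  moreover have "delta_word d 0 (b@(a@z)) = delta_word d 0 (a@z)"
    by (metis append_assoc dw_append assms(6))
  then have "b@(a@z) \<in> lang A d F" using zF z assms(3,4)
    by (auto simp: lang_def dw_append)
  ultimately have "a@z = b@(a@z)" using sf unfolding suffix_free_def by blast
  with assms(5) show False by (metis append_self_conv2)
qed

lemma reach: "sf_min_dfa n A d F \<Longrightarrow> q < n \<Longrightarrow> \<exists>y\<in>lists A. delta_word d 0 y = q"
  by (auto simp: sf_min_dfa_def minimal_dfa_def)

lemma no_zero:
  assumes "sf_min_dfa n A d F" "n\<ge>2" "t \<in> tsg A d" "q<n" shows "t q \<noteq> 0"
proof
  assume h: "t q = 0"
  obtain x where x: "x\<in>lists A" "x\<noteq>[]" "t = (\<lambda>q. delta_word d q x)" using tsgE[OF assms(3)] by blast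
  obtain y where y: "y \<in> lists A" "delta_word d 0 y = q" using reach assms by blast
  show False using sf_key[OF assms(1,2), of "[]" "y@x"] x y h assms by (auto simp: dw_append)
qed

lemma fixl:
  assumes "sf_min_dfa n A d F" "n\<ge>2" "t \<in> tsg A d" shows "t (n-1) = n-1"
proof (rule ccontr)
  assume h: "t (n-1) \<noteq> n-1"
  obtain x where x: "x\<in>lists A" "x\<noteq>[]" "t = (\<lambda>q. delta_word d q x)" using tsgE[OF assms(3)] by blast
  from assms(1) have isd: "is_dfa n A d F" and min: "minimal_dfa n A d F" and emp: "empty_state A d F (n-1)"
    by (auto simp: sf_min_dfa_def)
  have lt: "n - 1 < n" using assms(2) by simp
  have "t (n-1) < n" using dw_range[OF isd x(1) lt] x(3) by simp
  with min lt h obtain z where z: "z \<in> lists A"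
    "(delta_word d (t (n-1)) z \<in> F) \<noteq> (delta_word d (n-1) z \<in> F)"
    unfolding minimal_dfa_def by blast
  have "delta_word d (n-1) (x@z) \<notin> F" "delta_word d (n-1) z \<notin> F" using emp z x by (auto simp: empty_state_def)
  then show False using z x by (simp add: dw_append)
qed

lemma collapse0:
  assumes "sf_min_dfa n A d F" "n\<ge>2" "t \<in> tsg A d" "0 < q" "q < n-1" "t 0 = t q"
  shows "t 0 = n-1"
proof (rule ccontr)
  assume h: "t 0 \<noteq> n-1"
  obtain x where x: "x\<in>lists A" "x\<noteq>[]" "t = (\<lambda>q. delta_word d q x)" using tsgE[OF assms(3)] by blast
  have isd: "is_dfa n A d F" using assms(1) by (simp add: sf_min_dfa_def)
  obtain y where y: "y \<in> lists A" "delta_word d 0 y = q" using reach[OF assms(1), of q] assms by (meson diff_le_self less_le_trans)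
  have "y \<noteq> []" using y assms(4) by auto
  moreover have "t 0 < n" using dw_range[OF isd x(1), of 0] x(3) assms by simp
  ultimately show False using sf_key[OF assms(1,2) x(1) y(1)] x y h assms(6) by (simp add: dw_append)
qed

lemma excl:
  assumes "sf_min_dfa n A d F" "n\<ge>2" "t \<in> tsg A d" "u \<in> tsg A d" "0 < r" "r < n-1"
    "u (t 0) = u (t r)" "0 < u (t 0)" "u (t 0) < n-1"
  shows False
proof -
  obtain x where x: "x\<in>lists A" "x\<noteq>[]" "t = (\<lambda>q. delta_word d q x)" using tsgE[OF assms(3)] by blast
  obtain z where z: "z\<in>lists A" "z\<noteq>[]" "u = (\<lambda>q. delta_word d q z)" using tsgE[OF assms(4)] by blast
  obtain y where y: "y \<in> lists A" "delta_word d 0 y = r" using reach[OF assms(1), of r] assms by (meson diff_le_self less_le_trans)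
  have "y \<noteq> []" using y assms(5) by auto
  then show False using sf_key[OF assms(1,2), of "x@z" y] x y z assms(7,8,9)
    by (simp add: dw_append) linarith
qed


definition Wc :: "nat \<Rightarrow> (nat \<Rightarrow> nat) set" where
  "Wc n = {t \<in> trans n. (\<forall>q<n. t q \<noteq> 0) \<and> t (n-1) = n-1 \<and>
     (t 0 = n-1 \<or> (\<forall>q. 1 \<le> q \<and> q \<le> n-2 \<longrightarrow> t q = n-1))}"

definition Vc :: "nat \<Rightarrow> (nat \<Rightarrow> nat) set" where
  "Vc n = {t \<in> trans n. (\<forall>q<n. t q \<noteq> 0) \<and> t (n-1) = n-1 \<and>
     (\<forall>p<n. \<forall>q<n. p \<noteq> q \<longrightarrow> (t p = n-1 \<and> t q = n-1) \<or> t p \<noteq> t q)}"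

lemma trans_comp: "t \<in> trans n \<Longrightarrow> u \<in> trans n \<Longrightarrow> u \<circ> t \<in> trans n"
  by (auto simp: trans_def)

lemma finite_trans: "finite (trans n)"
proof -
  have "trans n \<subseteq> (\<lambda>g q. if q<n then g q else q) ` ({..<n} \<rightarrow>\<^sub>E {..<n})"
  proof
    fix t assume t: "t \<in> trans n"
    show "t \<in> (\<lambda>g q. if q<n then g q else q) ` ({..<n} \<rightarrow>\<^sub>E {..<n})"
    proof (rule image_eqI[where x="restrict t {..<n}"])
      show "t = (\<lambda>q. if q<n then restrict t {..<n} q else q)" using t by (auto simp: trans_def)
      show "restrict t {..<n} \<in> {..<n} \<rightarrow>\<^sub>E {..<n}" using t by (auto simp: trans_def)
    qed
  qed
  then show ?thesis by (rule finite_subset) (intro finite_imageI finite_PiE; simp)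
qed

lemma pow_fix: "t (n-1) = n-1 \<Longrightarrow> (t^^j) (n-1) = n-1"
  by (induction j) auto

lemma W_eq: assumes "n \<ge> 2" shows "W_sf n = Wc n"
proof
  show "W_sf n \<subseteq> Wc n" by (auto simp: W_sf_def B_sf_def Wc_def)
  show "Wc n \<subseteq> W_sf n"
  proof
    fix t assume t: "t \<in> Wc n"
    have pw: "(t^^j) 0 = n - 1 \<or> (\<forall>q. 0 < q \<and> q < n - 1 \<longrightarrow> (t^^j) 0 \<noteq> (t^^j) q)"
      if j: "j \<ge> 1" for j
    proof (cases "t 0 = n-1")
      case True
      obtain k where "j = Suc k" using j by (cases j) auto
      then have "(t^^j) 0 = (t^^k) (t 0)" by (simp only: funpow_Suc_right comp_apply)
      then show ?thesis using True pow_fix[of t n k] t by (simp add: Wc_def)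
    next
      case False
      then have mid: "\<forall>q. 1 \<le> q \<and> q \<le> n-2 \<longrightarrow> t q = n-1" using t by (simp add: Wc_def)
      have "t 0 \<noteq> 0" "t 0 < n" using t assms by (auto simp: Wc_def trans_def)
      then have p: "1 \<le> t 0" "t 0 \<le> n-2" using False by auto
      show ?thesis
      proof (cases j)
        case 0 then show ?thesis using j by simp
      next
        case (Suc k)
        show ?thesis
        proof (cases k)
          case 0
          then show ?thesis using Suc mid False by auto
        next
          case (Suc k')
          have "(t^^j) 0 = (t^^k') (t (t 0))" using \<open>j = Suc k\<close> Suc by (simp only: funpow_Suc_right comp_apply)
          then show ?thesis using mid p pow_fix[of t n k'] t by (simp add: Wc_def)
        qed
      qed
    qed
    show "t \<in> W_sf n" using t pw by (auto simp: W_sf_def B_sf_def Wc_def)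
  qed
qed

lemma Vc_comp: "t \<in> Vc n \<Longrightarrow> u \<in> Vc n \<Longrightarrow> u \<circ> t \<in> Vc n"
  unfolding Vc_def
  apply (simp add: trans_comp)
  apply (simp add: trans_def)
  by metis

lemma Wc_comp: "t \<in> Wc n \<Longrightarrow> u \<in> Wc n \<Longrightarrow> u \<circ> t \<in> Wc n"
  unfolding Wc_def
  apply (simp add: trans_comp)
  apply (simp add: trans_def)
  by metis

lemma Vc_pow: "t \<in> Vc n \<Longrightarrow> j \<ge> 1 \<Longrightarrow> t^^j \<in> Vc n"
proof (induction j)
  case 0 then show ?case by simp
next
  case (Suc j)
  show ?case
  proof (cases "j = 0")
    case True then show ?thesis using Suc by simp
  next
    case False
    then have "t^^j \<in> Vc n" using Suc by simp
    then show ?thesis using Vc_comp[of "t^^j" n t] Suc by (simp only: funpow.simps)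
  qed
qed

lemma V_eq: assumes "n \<ge> 2" shows "V_sf n = Vc n"
proof
  show "V_sf n \<subseteq> Vc n" by (auto simp: V_sf_def B_sf_def Vc_def)
  show "Vc n \<subseteq> V_sf n"
  proof
    fix t assume t: "t \<in> Vc n"
    have pw: "(t^^j) 0 = n - 1 \<or> (\<forall>q. 0 < q \<and> q < n - 1 \<longrightarrow> (t^^j) 0 \<noteq> (t^^j) q)"
      if j: "j \<ge> 1" for j
    proof -
      have "t^^j \<in> Vc n" using Vc_pow[OF t j] .
      then have h: "\<And>q. q<n \<Longrightarrow> 0 \<noteq> q \<Longrightarrow> ((t^^j) 0 = n-1 \<and> (t^^j) q = n-1) \<or> (t^^j) 0 \<noteq> (t^^j) q"
        using assms unfolding Vc_def by blast
      show ?thesis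
      proof (cases "(t^^j) 0 = n-1")
        case False
        have "(t^^j) 0 \<noteq> (t^^j) q" if "0 < q" "q < n-1" for q
          using h[of q] that False by auto
        then show ?thesis by blast
      qed simp
    qed
    show "t \<in> V_sf n" using t pw by (auto simp: V_sf_def B_sf_def Vc_def)
  qed
qed


lemma realize:
  assumes n4: "n \<ge> 4" and fin: "finite S"
   and sub: "S \<subseteq> {t \<in> trans n. (\<forall>q<n. t q \<noteq> 0) \<and> t (n-1) = n-1}"
   and clo: "\<forall>t\<in>S. \<forall>u\<in>S. u \<circ> t \<in> S"
   and cS: "\<forall>q. 0<q \<and> q<n \<longrightarrow> (\<lambda>x. if x<n then (if x=0 then q else n-1) else x) \<in> S"
   and eS: "\<forall>p. p < n-1 \<longrightarrow> (\<lambda>x. if x<n then (if x=p then 1 else n-1) else x) \<in> S"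
   and sfS: "\<forall>t\<in>S. \<forall>s. 0<s \<and> s<n \<and> t 0 = 1 \<longrightarrow> t s \<noteq> 1"
  shows "\<exists>A d F. sf_min_dfa n A d F \<and> tsg A d = S"
proof -
  obtain g where g: "bij_betw g {0..<card S} S" using ex_bij_betw_nat_finite[OF fin] by blast
  define A where "A = {0..<card S}"
  have gimg: "g ` A = S" using g unfolding A_def bij_betw_def by simp
  have gS: "a \<in> A \<Longrightarrow> g a \<in> S" for a using gimg by (metis imageI)
  have surjS: "t \<in> S \<Longrightarrow> \<exists>a\<in>A. g a = t" for t using gimg by (metis imageE)
  have gT: "a \<in> A \<Longrightarrow> g a \<in> trans n" for a using gS sub by blast
  have isd: "is_dfa n A g {1}" using gT n4 unfolding is_dfa_def A_def by auto
  have wS: "w \<in> lists A \<Longrightarrow> w \<noteq> [] \<Longrightarrow> (\<lambda>q. delta_word g q w) \<in> S" for w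
  proof (induction w)
    case Nil then show ?case by simp
  next
    case (Cons a w)
    show ?case
    proof (cases "w = []")
      case True
      have "(\<lambda>q. delta_word g q (a#w)) = g a" using True by auto
      then show ?thesis using gS Cons by simp
    next
      case False
      have "(\<lambda>q. delta_word g q (a#w)) = (\<lambda>q. delta_word g q w) \<circ> g a" by auto
      then show ?thesis using clo gS Cons False by simp
    qed
  qed
  have tsgS: "tsg A g = S"
  proof
    show "tsg A g \<subseteq> S" using wS by (auto simp: tsg_def)
    show "S \<subseteq> tsg A g"
    proof
      fix t assume "t \<in> S"
      then obtain a where a: "a \<in> A" "g a = t" using surjS by blast
      have "t = (\<lambda>q. delta_word g q [a])" using a by auto
      then show "t \<in> tsg A g" unfolding tsg_def using a(1)
        by (intro CollectI exI[of _ "[a]"]) simp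
    qed
  qed
  have reach: "\<exists>w\<in>lists A. delta_word g 0 w = q" if q: "q < n" for q
  proof (cases "q = 0")
    case True then show ?thesis by (intro bexI[of _ "[]"]) auto
  next
    case False
    then obtain a where a: "a \<in> A" "g a = (\<lambda>x. if x<n then (if x=0 then q else n-1) else x)"
      using surjS[OF cS[rule_format, of q]] q False by blast
    then show ?thesis using q by (intro bexI[of _ "[a]"]) auto
  qed
  have dist1: "\<exists>w\<in>lists A. (delta_word g p w \<in> {1}) \<noteq> (delta_word g q w \<in> {1})"
    if pq0: "p < n-1" "q < n" "p \<noteq> q" for p q
  proof -
    obtain a where a: "a \<in> A" "g a = (\<lambda>x. if x<n then (if x=p then 1 else n-1) else x)"
      using surjS[OF eS[rule_format, of p]] pq0 by blast
    then show ?thesis using pq0 n4 by (intro bexI[of _ "[a]"]) auto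
  qed
  have min: "minimal_dfa n A g {1}"
    unfolding minimal_dfa_def
  proof (intro conjI allI impI)
    show "\<exists>w\<in>lists A. delta_word g 0 w = q" if "q < n" for q using reach that by blast
    fix p q assume pq: "p < n" "q < n" "p \<noteq> q"
    show "\<exists>w\<in>lists A. (delta_word g p w \<in> {1}) \<noteq> (delta_word g q w \<in> {1})"
    proof (cases "p = n-1")
      case False then show ?thesis using dist1 pq by simp
    next
      case True
      then have "q < n-1" using pq by simp
      then show ?thesis using dist1[of q p] pq by metis
    qed
  qed
  have gfix: "g a (n-1) = n-1" if "a \<in> A" for a
    using subsetD[OF sub gS[OF that]] by simp
  have fixw: "w \<in> lists A \<Longrightarrow> delta_word g (n-1) w = n-1" for w
  proof (induction w)
    case (Cons a w) then show ?case using gfix by simp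
  qed simp
  have emp: "empty_state A g {1} (n-1)" using fixw n4 by (auto simp: empty_state_def)
  have sf: "suffix_free (lang A g {1})"
    unfolding suffix_free_def
  proof (intro ballI impI)
    fix w u assume w: "w \<in> lang A g {1}" and u: "u \<in> lang A g {1}" and "\<exists>v. w = v @ u"
    then obtain v where v: "w = v @ u" by blast
    show "u = w"
    proof (cases "v = []")
      case True then show ?thesis using v by simp
    next
      case False
      have vl: "v \<in> lists A" "u \<in> lists A" using w v u by (auto simp: lang_def)
      have fv: "(\<lambda>q. delta_word g q v) \<in> S" using wS vl False by blast
      let ?s = "delta_word g 0 v"
      have s0: "?s \<noteq> 0" "?s < n" using fv sub n4 by (auto simp: trans_def)
      have u1: "delta_word g 0 u = 1" using u by (auto simp: lang_def)
      have s1: "delta_word g ?s u = 1" using w v by (auto simp: lang_def dw_append)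
      have "u \<noteq> []" using u1 by auto
      then have "(\<lambda>q. delta_word g q u) \<in> S" using wS vl by blast
      then show ?thesis using sfS u1 s1 s0 by fastforce
    qed
  qed
  have "sf_min_dfa n A g {1}" using isd min emp sf by (simp add: sf_min_dfa_def)
  then show ?thesis using tsgS by blast
qed


lemma W_real: assumes n4: "n \<ge> 4" shows "\<exists>A d F. sf_min_dfa n A d F \<and> tsg A d = Wc n"
proof (rule realize[OF n4])
  show "finite (Wc n)" using finite_trans[of n] by (rule finite_subset[rotated]) (auto simp: Wc_def)
  show "Wc n \<subseteq> {t \<in> trans n. (\<forall>q<n. t q \<noteq> 0) \<and> t (n-1) = n-1}" by (auto simp: Wc_def)
  show "\<forall>t\<in>Wc n. \<forall>u\<in>Wc n. u \<circ> t \<in> Wc n" using Wc_comp by blast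
  show "\<forall>q. 0<q \<and> q<n \<longrightarrow> (\<lambda>x. if x<n then (if x=0 then q else n-1) else x) \<in> Wc n"
  proof (intro allI impI)
    fix q assume q: "0<q \<and> q<n"
    show "(\<lambda>x. if x<n then (if x=0 then q else n-1) else x) \<in> Wc n"
      unfolding Wc_def trans_def using q n4 by (cases "q = n-1") auto
  qed
  show "\<forall>p. p < n-1 \<longrightarrow> (\<lambda>x. if x<n then (if x=p then 1 else n-1) else x) \<in> Wc n"
  proof (intro allI impI)
    fix p assume p: "p < n-1"
    show "(\<lambda>x. if x<n then (if x=p then 1 else n-1) else x) \<in> Wc n"
      unfolding Wc_def trans_def using p n4 by (cases "p = 0") auto
  qed
  show "\<forall>t\<in>Wc n. \<forall>s. 0<s \<and> s<n \<and> t 0 = 1 \<longrightarrow> t s \<noteq> 1"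
  proof (intro ballI allI impI)
    fix t s assume t: "t \<in> Wc n" and s: "0<s \<and> s<n \<and> t 0 = 1"
    then have mid: "\<forall>q. 1 \<le> q \<and> q \<le> n-2 \<longrightarrow> t q = n-1" "t (n-1) = n-1" using n4 by (auto simp: Wc_def)
    show "t s \<noteq> 1"
    proof (cases "s = n-1")
      case True then show ?thesis using mid n4 by simp
    next
      case False
      then have "s \<le> n-2" using s by linarith
      then show ?thesis using mid(1)[rule_format, of s] s n4 by simp
    qed
  qed
qed

lemma V_real: assumes n4: "n \<ge> 4" shows "\<exists>A d F. sf_min_dfa n A d F \<and> tsg A d = Vc n"
proof (rule realize[OF n4])
  show "finite (Vc n)" using finite_trans[of n] by (rule finite_subset[rotated]) (auto simp: Vc_def)
  show "Vc n \<subseteq> {t \<in> trans n. (\<forall>q<n. t q \<noteq> 0) \<and> t (n-1) = n-1}" by (auto simp: Vc_def)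
  show "\<forall>t\<in>Vc n. \<forall>u\<in>Vc n. u \<circ> t \<in> Vc n" using Vc_comp by blast
  show "\<forall>q. 0<q \<and> q<n \<longrightarrow> (\<lambda>x. if x<n then (if x=0 then q else n-1) else x) \<in> Vc n"
  proof (intro allI impI)
    fix q assume q: "0<q \<and> q<n"
    show "(\<lambda>x. if x<n then (if x=0 then q else n-1) else x) \<in> Vc n"
      unfolding Vc_def trans_def using q n4 by auto
  qed
  show "\<forall>p. p < n-1 \<longrightarrow> (\<lambda>x. if x<n then (if x=p then 1 else n-1) else x) \<in> Vc n"
  proof (intro allI impI)
    fix p assume p: "p < n-1"
    show "(\<lambda>x. if x<n then (if x=p then 1 else n-1) else x) \<in> Vc n"
      unfolding Vc_def trans_def using p n4 by auto
  qed
  show "\<forall>t\<in>Vc n. \<forall>s. 0<s \<and> s<n \<and> t 0 = 1 \<longrightarrow> t s \<noteq> 1"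
  proof (intro ballI allI impI)
    fix t s assume t: "t \<in> Vc n" and s: "0<s \<and> s<n \<and> t 0 = 1"
    then have inj: "\<forall>p<n. \<forall>q<n. p \<noteq> q \<longrightarrow> (t p = n-1 \<and> t q = n-1) \<or> t p \<noteq> t q"
      by (auto simp: Vc_def)
    have "0 < n" using n4 by simp
    then show "t s \<noteq> 1" using inj[rule_format, of 0 s] s n4 by auto
  qed
qed


theorem lemma4:
  fixes n :: nat and Alph :: "nat set" and delta :: "nat \<Rightarrow> nat \<Rightarrow> nat" and F :: "nat set"
    and X :: "(nat \<Rightarrow> nat) set"
  assumes "n \<ge> 4"
    and "sf_min_dfa n Alph delta F"
    and "X = tsg Alph delta"
    and "\<forall>Alph' delta' F'. sf_min_dfa n Alph' delta' F' \<longrightarrow> card (tsg Alph' delta') \<le> card X"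
    and "X \<noteq> V_sf n"
    and "X \<noteq> W_sf n"
  shows "\<forall>t\<in>X. \<forall>t'\<in>X. t \<noteq> t' \<longrightarrow> \<not> conflict n t t'"
proof (intro ballI impI notI)
  fix t t' assume t: "t \<in> X" and t': "t' \<in> X" and "t \<noteq> t'" and c: "conflict n t t'"
  have n2: "n \<ge> 2" using assms(1) by simp
  have sm: "sf_min_dfa n Alph delta F" by (rule assms(2))
  have isd: "is_dfa n Alph delta F" and sf: "suffix_free (lang Alph delta F)"
    using sm by (auto simp: sf_min_dfa_def)
  from c have "\<forall>Alph delta F. is_dfa n Alph delta F \<and> t \<in> tsg Alph delta \<and> t' \<in> tsg Alph delta \<longrightarrow>
       \<not> suffix_free (lang Alph delta F) \<or>
       (\<forall>p q. 1 \<le> p \<and> p \<le> n - 2 \<and> 1 \<le> q \<and> q \<le> n - 2 \<and> p \<noteq> q \<longrightarrow> colliding n (tsg Alph delta) p q) \<or>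
       (\<forall>p q. 1 \<le> p \<and> p \<le> n - 2 \<and> 1 \<le> q \<and> q \<le> n - 2 \<and> p \<noteq> q \<longrightarrow>
          (\<exists>u\<in>tsg Alph delta. focused n u p q))" unfolding conflict_def by blast
  then have "\<not> suffix_free (lang Alph delta F) \<or>
       (\<forall>p q. 1 \<le> p \<and> p \<le> n - 2 \<and> 1 \<le> q \<and> q \<le> n - 2 \<and> p \<noteq> q \<longrightarrow> colliding n X p q) \<or>
       (\<forall>p q. 1 \<le> p \<and> p \<le> n - 2 \<and> 1 \<le> q \<and> q \<le> n - 2 \<and> p \<noteq> q \<longrightarrow>
          (\<exists>u\<in>X. focused n u p q))"
    using isd t t' assms(3) by blast
  with sf have cases: "(\<forall>p q. 1 \<le> p \<and> p \<le> n - 2 \<and> 1 \<le> q \<and> q \<le> n - 2 \<and> p \<noteq> q \<longrightarrow> colliding n X p q) \<or>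
       (\<forall>p q. 1 \<le> p \<and> p \<le> n - 2 \<and> 1 \<le> q \<and> q \<le> n - 2 \<and> p \<noteq> q \<longrightarrow>
          (\<exists>u\<in>X. focused n u p q))" by blast
  have tsgX: "s \<in> X \<Longrightarrow> s \<in> tsg Alph delta" for s using assms(3) by simp
  have basic: "s \<in> trans n" "\<And>q. q < n \<Longrightarrow> s q \<noteq> 0" "s (n-1) = n-1" if "s \<in> X" for s
    using tsg_trans[OF isd tsgX[OF that]] no_zero[OF sm n2 tsgX[OF that]] fixl[OF sm n2 tsgX[OF that]]
    by auto
  have finT: "finite (trans n)" by (rule finite_trans)
  show False
    using cases
  proof
    assume coll: "\<forall>p q. 1 \<le> p \<and> p \<le> n - 2 \<and> 1 \<le> q \<and> q \<le> n - 2 \<and> p \<noteq> q \<longrightarrow> colliding n X p q"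
    have sub: "X \<subseteq> Vc n"
    proof
      fix s assume s: "s \<in> X"
      have inj: "(s p = n-1 \<and> s q = n-1) \<or> s p \<noteq> s q" if pq: "p < n" "q < n" "p \<noteq> q" for p q
      proof (cases "s p = s q")
        case False then show ?thesis by simp
      next
        case eq: True
        have "s p = n-1"
        proof (cases "p = n-1 \<or> q = n-1")
          case True then show ?thesis using basic(3)[OF s] eq by auto
        next
          case nl: False
          show ?thesis
          proof (cases "p = 0 \<or> q = 0")
            case True
            then show ?thesis
            proof
              assume p0: "p = 0"
              then have "0 < q" "q < n-1" using pq nl by auto
              then show ?thesis using collapse0[OF sm n2 tsgX[OF s]] eq p0 by simp
            next
              assume q0: "q = 0"
              then have "0 < p" "p < n-1" using pq nl by auto
              then show ?thesis using collapse0[OF sm n2 tsgX[OF s], of p] eq q0 by auto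
            qed
          next
            case nz: False
            show ?thesis
            proof (rule ccontr)
              assume ne: "s p \<noteq> n-1"
              have "s p \<noteq> 0" "s p < n" using basic[OF s] pq by (auto simp: trans_def)
              then have mid: "0 < s p" "s p < n-1" using ne by auto
              have "1 \<le> p" "p \<le> n-2" "1 \<le> q" "q \<le> n-2" using pq nl nz by auto
              then have "colliding n X p q" using coll pq by blast
              then obtain t0 r where t0: "t0 \<in> X" "0 < r" "r < n-1"
                "(t0 0 = p \<and> t0 r = q) \<or> (t0 0 = q \<and> t0 r = p)"
                unfolding colliding_def by blast
              show False
                using t0(4)
              proof
                assume "t0 0 = p \<and> t0 r = q"
                then show False using excl[OF sm n2 tsgX[OF t0(1)] tsgX[OF s] t0(2,3)] eq mid by simp
              next
                assume "t0 0 = q \<and> t0 r = p"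
                then show False using excl[OF sm n2 tsgX[OF t0(1)] tsgX[OF s] t0(2,3)] eq mid by simp
              qed
            qed
          qed
        qed
        then show ?thesis using eq by simp
      qed
      show "s \<in> Vc n" unfolding Vc_def using basic[OF s] inj by blast
    qed
    obtain A d G where AG: "sf_min_dfa n A d G" "tsg A d = Vc n" using V_real[OF assms(1)] by blast
    have "card (Vc n) \<le> card X" using assms(4) AG by metis
    moreover have finV: "finite (Vc n)" using finT by (rule finite_subset[rotated]) (auto simp: Vc_def)
    ultimately have "X = Vc n" using sub card_subset_eq card_mono by (metis le_antisym)
    then show False using assms(5) V_eq[OF n2] by simp
  next
    assume foc: "\<forall>p q. 1 \<le> p \<and> p \<le> n - 2 \<and> 1 \<le> q \<and> q \<le> n - 2 \<and> p \<noteq> q \<longrightarrow> (\<exists>u\<in>X. focused n u p q)"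
    have sub: "X \<subseteq> Wc n"
    proof
      fix s assume s: "s \<in> X"
      have "s 0 = n-1 \<or> (\<forall>q. 1 \<le> q \<and> q \<le> n-2 \<longrightarrow> s q = n-1)"
      proof (cases "s 0 = n-1")
        case True then show ?thesis by simp
      next
        case ne: False
        have "s 0 \<noteq> 0" "s 0 < n" using basic[OF s] n2 by (auto simp: trans_def)
        then have pmid: "1 \<le> s 0" "s 0 \<le> n-2" using ne by auto
        have "\<forall>q. 1 \<le> q \<and> q \<le> n-2 \<longrightarrow> s q = n-1"
        proof (intro allI impI)
          fix q assume q: "1 \<le> q \<and> q \<le> n-2"
          show "s q = n-1"
          proof (rule ccontr)
            assume nq: "s q \<noteq> n-1"
            have "s q \<noteq> 0" "s q < n" using basic[OF s] q n2 by (auto simp: trans_def)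
            then have qmid: "1 \<le> s q" "s q \<le> n-2" using nq by auto
            have "s q \<noteq> s 0" using collapse0[OF sm n2 tsgX[OF s], of q] q ne n2 by fastforce
            then obtain u where u: "u \<in> X" "focused n u (s 0) (s q)" using foc pmid qmid by metis
            then obtain r where r: "0 < r" "r < n-1" "u (s 0) = r" "u (s q) = r"
              unfolding focused_def by blast
            have "0 < q" "q < n-1" using q n2 by auto
            then show False using excl[OF sm n2 tsgX[OF s] tsgX[OF u(1)], of q] r by auto
          qed
        qed
        then show ?thesis by blast
      qed
      then show "s \<in> Wc n" unfolding Wc_def using basic[OF s] by blast
    qed
    obtain A d G where AG: "sf_min_dfa n A d G" "tsg A d = Wc n" using W_real[OF assms(1)] by blast
    have "card (Wc n) \<le> card X" using assms(4) AG by metis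
    moreover have finW: "finite (Wc n)" using finT by (rule finite_subset[rotated]) (auto simp: Wc_def)
    ultimately have "X = Wc n" using sub card_subset_eq card_mono by (metis le_antisym)
    then show False using assms(6) W_eq[OF n2] by simp
  qed
qed

end
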